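(* Let $\mathbb{F}_q$ be a finite field and let $T_1=\{A=(a_{ij})\in UU_4(\mathbb{F}_q): a_{34}=0\}$, a subgroup of the group $UU_4(\mathbb{F}_q)$ of $4\times4$ upper triangular unipotent matrices over $\mathbb{F}_q$. Then $T_1$ is an AC-group and $\omega(T_1)=q^2+1$.
   Context: A group is an AC-group if the centralizer of every non-central element is abelian. A subset $N$ of a group is non-commuting if $xy\ne yx$ for all distinct $x,y\in N$; $\omega(S)$ is the maximum cardinality of a non-commuting subset of $S$. *)

theory Defs
  imports "HOL-Algebra.Group"
begin

text \<open>4x4 matrices over a field are represented as functions nat => nat => 'a,
  indices 0..3 (so the paper's entry a_ij is A (i-1) (j-1)), with all entries
  outside the range {0..3}x{0..3} equal to 0.\<close>

definition mat4_mult :: "(nat \<Rightarrow> nat \<Rightarrow> 'a::comm_ring_1) \<Rightarrow> (nat \<Rightarrow> nat \<Rightarrow> 'a) \<Rightarrow> nat \<Rightarrow> nat \<Rightarrow> 'a" where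
  "mat4_mult A B = (\<lambda>i j. if i < 4 \<and> j < 4 then (\<Sum>k<4. A i k * B k j) else 0)"

definition mat4_one :: "nat \<Rightarrow> nat \<Rightarrow> 'a::comm_ring_1" where
  "mat4_one = (\<lambda>i j. if i < 4 \<and> j < 4 \<and> i = j then 1 else 0)"

definition UU4 :: "(nat \<Rightarrow> nat \<Rightarrow> 'a::comm_ring_1) set" where
  "UU4 = {A. (\<forall>i j. (4 \<le> i \<or> 4 \<le> j) \<longrightarrow> A i j = 0)
            \<and> (\<forall>i<4. A i i = 1) \<and> (\<forall>i<4. \<forall>j<i. A i j = 0)}"

text \<open>T_1 = {A in UU_4 : a_34 = 0}; a_34 is A 2 3 with 0-based indices.\<close>
definition T1 :: "(nat \<Rightarrow> nat \<Rightarrow> 'a::comm_ring_1) set" where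
  "T1 = {A \<in> UU4. A 2 3 = 0}"

definition UU4_group :: "'a::comm_ring_1 itself \<Rightarrow> (nat \<Rightarrow> nat \<Rightarrow> 'a) monoid" where
  "UU4_group _ = \<lparr>carrier = UU4, mult = mat4_mult, one = mat4_one\<rparr>"

definition T1_group :: "'a::comm_ring_1 itself \<Rightarrow> (nat \<Rightarrow> nat \<Rightarrow> 'a) monoid" where
  "T1_group _ = \<lparr>carrier = T1, mult = mat4_mult, one = mat4_one\<rparr>"

definition centralizer :: "('g, 'b) monoid_scheme \<Rightarrow> 'g \<Rightarrow> 'g set" where
  "centralizer G x = {y \<in> carrier G. x \<otimes>\<^bsub>G\<^esub> y = y \<otimes>\<^bsub>G\<^esub> x}"

definition group_center :: "('g, 'b) monoid_scheme \<Rightarrow> 'g set" where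
  "group_center G = {x \<in> carrier G. \<forall>y \<in> carrier G. x \<otimes>\<^bsub>G\<^esub> y = y \<otimes>\<^bsub>G\<^esub> x}"

definition AC_group :: "('g, 'b) monoid_scheme \<Rightarrow> bool" where
  "AC_group G \<longleftrightarrow> group G \<and>
     (\<forall>x \<in> carrier G. x \<notin> group_center G \<longrightarrow>
        (\<forall>y \<in> centralizer G x. \<forall>z \<in> centralizer G x. y \<otimes>\<^bsub>G\<^esub> z = z \<otimes>\<^bsub>G\<^esub> y))"

definition non_commuting :: "('g, 'b) monoid_scheme \<Rightarrow> 'g set \<Rightarrow> bool" where
  "non_commuting G N \<longleftrightarrow> (\<forall>x \<in> N. \<forall>y \<in> N. x \<noteq> y \<longrightarrow> x \<otimes>\<^bsub>G\<^esub> y \<noteq> y \<otimes>\<^bsub>G\<^esub> x)"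

definition omega :: "('g, 'b) monoid_scheme \<Rightarrow> nat" where
  "omega G = Max {card N | N. N \<subseteq> carrier G \<and> non_commuting G N}"

end

theory Submission
  imports Defs
begin

definition mk :: "'a::comm_ring_1 \<Rightarrow> 'a \<Rightarrow> 'a \<Rightarrow> 'a \<Rightarrow> 'a \<Rightarrow> nat \<Rightarrow> nat \<Rightarrow> 'a" where
  "mk a b c d e = (\<lambda>i j. if i = j \<and> i < 4 then 1
     else if i = 0 \<and> j = 1 then a else if i = 0 \<and> j = 2 then b
     else if i = 0 \<and> j = 3 then c else if i = 1 \<and> j = 2 then d
     else if i = 1 \<and> j = 3 then e else 0)"

lemma mk_apply [simp]:
  "mk a b c d e 0 1 = a" "mk a b c d e 0 2 = b" "mk a b c d e 0 3 = c"
  "mk a b c d e 1 2 = d" "mk a b c d e 1 3 = e"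
  by (simp_all add: mk_def)

lemma mk_apply2 [simp]:
  "mk a b c d e 0 (Suc 0) = a" "mk a b c d e (Suc 0) 2 = d" "mk a b c d e (Suc 0) 3 = e"
  by (simp_all add: mk_def)

lemma less4: "(i::nat) < 4 \<longleftrightarrow> i = 0 \<or> i = 1 \<or> i = 2 \<or> i = 3" by auto

lemma sum4: "(\<Sum>k<(4::nat). f k) = f 0 + f 1 + f 2 + (f 3 :: 'a::comm_monoid_add)"
  by (simp add: eval_nat_numeral add.assoc)

lemma T1_mk: "X \<in> T1 \<Longrightarrow> X = mk (X 0 1) (X 0 2) (X 0 3) (X 1 2) (X 1 3)"
proof (rule ext, rule ext)
  fix i j assume X: "X \<in> T1"
  show "X i j = mk (X 0 1) (X 0 2) (X 0 3) (X 1 2) (X 1 3) i j"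
  proof (cases "i < 4 \<and> j < 4")
    case True
    then show ?thesis using X unfolding less4 T1_def UU4_def mk_def by auto
  next
    case False
    then show ?thesis using X unfolding T1_def UU4_def mk_def by auto
  qed
qed

lemma mk_T1: "mk a b c d e \<in> T1"
  unfolding T1_def UU4_def mk_def by auto

lemma mult_mk: "mat4_mult (mk a b c d e) (mk a' b' c' d' e') =
   mk (a+a') (b+b'+a*d') (c+c'+a*e') (d+d') (e+e')"
proof (rule ext, rule ext)
  fix i j
  show "mat4_mult (mk a b c d e) (mk a' b' c' d' e') i j =
   mk (a+a') (b+b'+a*d') (c+c'+a*e') (d+d') (e+e') i j"
  proof (cases "i < 4 \<and> j < 4")
    case True
    then show ?thesis unfolding mat4_mult_def sum4 less4 by (auto simp: mk_def algebra_simps)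
  next
    case False
    then show ?thesis unfolding mat4_mult_def mk_def by auto
  qed
qed

lemma one_mk: "mat4_one = mk 0 0 0 0 0"
  unfolding mat4_one_def mk_def by (auto intro!: ext)

lemma mk_eq: "mk a b c d e = mk a' b' c' d' e' \<longleftrightarrow> a = a' \<and> b = b' \<and> c = c' \<and> d = d' \<and> e = e'"
  by (metis mk_apply)

lemma assoc4: "mat4_mult (mat4_mult A B) C = mat4_mult A (mat4_mult B (C::nat\<Rightarrow>nat\<Rightarrow>'a::comm_ring_1))"
  unfolding mat4_mult_def sum4 by (auto intro!: ext simp: algebra_simps)

lemma one_left: "(\<And>i j. (4 \<le> i \<or> 4 \<le> j) \<Longrightarrow> z i j = 0) \<Longrightarrow> mat4_mult mat4_one z = (z::nat\<Rightarrow>nat\<Rightarrow>'a::comm_ring_1)"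
proof (rule ext, rule ext)
  fix i j assume h: "\<And>i j. (4 \<le> i \<or> 4 \<le> j) \<Longrightarrow> z i j = 0"
  show "mat4_mult mat4_one z i j = z i j"
  proof (cases "i < 4 \<and> j < 4")
    case True
    then show ?thesis unfolding mat4_mult_def sum4 less4 mat4_one_def by auto
  next
    case False
    then show ?thesis using h unfolding mat4_mult_def by auto
  qed
qed

lemma T1_ex: "X \<in> T1 \<Longrightarrow> \<exists>a b c d e. X = mk a b c d e"
  using T1_mk by blast

lemma T1_zero: "X \<in> T1 \<Longrightarrow> (4 \<le> i \<or> 4 \<le> j) \<Longrightarrow> X i j = 0"
  unfolding T1_def UU4_def by auto

lemma comm_T1:
  assumes X: "X \<in> T1" and Y: "Y \<in> T1"
  shows "mat4_mult X Y = mat4_mult Y X \<longleftrightarrow>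
     X 0 1 * Y 1 2 = Y 0 1 * X 1 2 \<and> X 0 1 * Y 1 3 = Y 0 1 * X 1 3"
proof -
  obtain a b c d e where x: "X = mk a b c d e" using T1_ex[OF X] by blast
  obtain a' b' c' d' e' where y: "Y = mk a' b' c' d' e'" using T1_ex[OF Y] by blast
  show ?thesis unfolding x y mult_mk mk_eq mk_apply by (auto simp: algebra_simps)
qed

definition minv :: "(nat \<Rightarrow> nat \<Rightarrow> 'a::comm_ring_1) \<Rightarrow> nat \<Rightarrow> nat \<Rightarrow> 'a" where
  "minv X = mk (- X 0 1) (- X 0 2 + X 0 1 * X 1 2) (- X 0 3 + X 0 1 * X 1 3) (- X 1 2) (- X 1 3)"

lemma minv_T1: "minv X \<in> T1" unfolding minv_def by (rule mk_T1)

lemma minv_l: "X \<in> T1 \<Longrightarrow> mat4_mult (minv X) X = mat4_one"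
proof -
  assume "X \<in> T1"
  then obtain a b c d e where x: "X = mk a b c d e" using T1_ex by blast
  show ?thesis unfolding x minv_def mk_apply mult_mk one_mk mk_eq by (simp add: algebra_simps)
qed

lemma minv_r: "X \<in> T1 \<Longrightarrow> mat4_mult X (minv X) = mat4_one"
proof -
  assume "X \<in> T1"
  then obtain a b c d e where x: "X = mk a b c d e" using T1_ex by blast
  show ?thesis unfolding x minv_def mk_apply mult_mk one_mk mk_eq by (simp add: algebra_simps)
qed

lemma one_right_T1: "X \<in> T1 \<Longrightarrow> mat4_mult X mat4_one = X"
proof -
  assume "X \<in> T1"
  then obtain a b c d e where x: "X = mk a b c d e" using T1_ex by blast
  show ?thesis unfolding x one_mk mult_mk by simp
qed

lemma one_left_T1: "X \<in> T1 \<Longrightarrow> mat4_mult mat4_one X = X"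
  by (rule one_left) (auto simp: T1_zero)

lemma T1_sub: "T1 \<subseteq> UU4" unfolding T1_def by auto

lemma mult_T1: "X \<in> T1 \<Longrightarrow> Y \<in> T1 \<Longrightarrow> mat4_mult X Y \<in> T1"
  by (metis T1_ex mult_mk mk_T1)

lemma one_T1: "mat4_one \<in> T1" unfolding one_mk by (rule mk_T1)

lemma inv_UU4: "X \<in> T1 \<Longrightarrow> inv\<^bsub>UU4_group F\<^esub> X = minv X"
  unfolding m_inv_def UU4_group_def
proof (simp, rule the_equality)
  assume X: "X \<in> T1"
  show "minv X \<in> UU4 \<and> mat4_mult X (minv X) = mat4_one \<and> mat4_mult (minv X) X = mat4_one"
    using X minv_T1 T1_sub minv_l minv_r by blast
  fix z assume z: "z \<in> UU4 \<and> mat4_mult X z = mat4_one \<and> mat4_mult z X = mat4_one"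
  have "z = mat4_mult mat4_one z"
    by (rule one_left[symmetric]) (use z in \<open>auto simp: UU4_def\<close>)
  also have "\<dots> = mat4_mult (minv X) (mat4_mult X z)" using minv_l[OF X] assoc4 by metis
  also have "\<dots> = minv X" using z one_right_T1[OF minv_T1] by simp
  finally show "z = minv X" .
qed

lemma subgroup_T1: "subgroup T1 (UU4_group F)"
proof (rule subgroup.intro)
  show "T1 \<subseteq> carrier (UU4_group F)" using T1_sub by (simp add: UU4_group_def)
qed (auto simp: UU4_group_def mult_T1 one_T1 inv_UU4[unfolded UU4_group_def] minv_T1)

lemma group_T1: "group (T1_group F)"
proof (rule groupI)
  fix x assume "x \<in> carrier (T1_group F)"
  then show "\<exists>y\<in>carrier (T1_group F). y \<otimes>\<^bsub>T1_group F\<^esub> x = \<one>\<^bsub>T1_group F\<^esub>"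
    using minv_l minv_T1 by (auto simp: T1_group_def)
qed (auto simp: T1_group_def mult_T1 one_T1 assoc4 one_left_T1)

lemma ac_alg:
  fixes a d e y1 y2 y3 z1 z2 z3 :: "'a::field"
  assumes nz: "\<not>(a=0 \<and> d=0 \<and> e=0)" and h: "a*y2 = y1*d" "a*y3 = y1*e" "a*z2 = z1*d" "a*z3 = z1*e"
  shows "y1*z2 = z1*y2 \<and> y1*z3 = z1*y3"
proof (cases "a = 0")
  case True
  then have "y1 = 0" "z1 = 0" using nz h by auto
  then show ?thesis by simp
next
  case False
  have "a*(y1*z2) = a*(z1*y2)" "a*(y1*z3) = a*(z1*y3)"
    by (metis h mult.left_commute mult.commute)+
  then show ?thesis using False mult_left_cancel by blast
qed

lemma center_nz:
  fixes F :: "'a::field itself"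
  assumes x: "x \<in> T1" and nc: "x \<notin> group_center (T1_group F)"
  shows "\<not>(x 0 1 = 0 \<and> x 1 2 = 0 \<and> x 1 3 = 0)"
proof
  assume z: "x 0 1 = 0 \<and> x 1 2 = 0 \<and> x 1 3 = 0"
  have "x \<in> group_center (T1_group F)"
    unfolding group_center_def using x z by (auto simp: T1_group_def comm_T1)
  then show False using nc by simp
qed

lemma AC_T1: "AC_group (T1_group (F :: 'a::field itself))"
  unfolding AC_group_def
proof (intro conjI group_T1 ballI impI)
  fix x y z assume x: "x \<in> carrier (T1_group F)" and nc: "x \<notin> group_center (T1_group F)"
    and y: "y \<in> centralizer (T1_group F) x" and z: "z \<in> centralizer (T1_group F) x"
  have xT: "x \<in> T1" using x by (simp add: T1_group_def)
  have yT: "y \<in> T1" and yc: "x 0 1 * y 1 2 = y 0 1 * x 1 2 \<and> x 0 1 * y 1 3 = y 0 1 * x 1 3"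
    using y xT by (auto simp: centralizer_def T1_group_def comm_T1)
  have zT: "z \<in> T1" and zc: "x 0 1 * z 1 2 = z 0 1 * x 1 2 \<and> x 0 1 * z 1 3 = z 0 1 * x 1 3"
    using z xT by (auto simp: centralizer_def T1_group_def comm_T1)
  have "y 0 1 * z 1 2 = z 0 1 * y 1 2 \<and> y 0 1 * z 1 3 = z 0 1 * y 1 3"
    using ac_alg[OF center_nz[OF xT nc]] yc zc by blast
  then show "y \<otimes>\<^bsub>T1_group F\<^esub> z = z \<otimes>\<^bsub>T1_group F\<^esub> y"
    using yT zT by (simp add: T1_group_def comm_T1)
qed

definition cls :: "(nat \<Rightarrow> nat \<Rightarrow> 'a::field) \<Rightarrow> ('a \<times> 'a) option" where
  "cls X = (if X 0 1 = 0 then None else Some (X 1 2 / X 0 1, X 1 3 / X 0 1))"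

lemma cls_comm: assumes X: "X \<in> T1" and Y: "Y \<in> T1" and c: "cls X = cls Y"
  shows "mat4_mult X Y = mat4_mult Y X"
proof (cases "X 0 1 = 0")
  case True
  then have "Y 0 1 = 0" using c by (simp add: cls_def split: if_splits)
  then show ?thesis using True by (simp add: comm_T1[OF X Y])
next
  case False
  then have Y0: "Y 0 1 \<noteq> 0" using c by (simp add: cls_def split: if_splits)
  have "X 1 2 / X 0 1 = Y 1 2 / Y 0 1" "X 1 3 / X 0 1 = Y 1 3 / Y 0 1"
    using c False Y0 by (simp_all add: cls_def)
  then have "X 1 2 * Y 0 1 = Y 1 2 * X 0 1" "X 1 3 * Y 0 1 = Y 1 3 * X 0 1"
    using False Y0 by (simp_all add: frac_eq_eq)
  then show ?thesis by (simp add: comm_T1[OF X Y] mult.commute)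
qed
lemma card_opt: "card (UNIV :: ('a::finite \<times> 'a) option set) = card (UNIV::'a set)^2 + 1"
proof -
  have "card (UNIV :: ('a \<times> 'a) option set) = card (insert None (range (Some :: 'a \<times> 'a \<Rightarrow> _)))"
    by (subst UNIV_option_conv) (rule refl)
  also have "\<dots> = Suc (card (range (Some :: 'a \<times> 'a \<Rightarrow> _)))"
    by (rule card_insert_disjoint) auto
  also have "card (range (Some :: 'a \<times> 'a \<Rightarrow> _)) = card (UNIV :: ('a \<times> 'a) set)"
    by (rule card_image) simp
  also have "card (UNIV :: ('a \<times> 'a) set) = card (UNIV::'a set) * card (UNIV::'a set)"
    by (metis UNIV_Times_UNIV card_cartesian_product)
  finally show ?thesis by (simp add: power2_eq_square)
qed

lemma upper:
  fixes N :: "(nat \<Rightarrow> nat \<Rightarrow> 'a::{field,finite}) set" and F :: "'a itself"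
  assumes N: "N \<subseteq> carrier (T1_group F)" and nc: "non_commuting (T1_group F) N"
  shows "card N \<le> card (UNIV::'a set)^2 + 1"
proof (cases "finite N")
  case True
  have "inj_on cls N"
  proof (rule inj_onI, rule ccontr)
    fix x y assume xy: "x \<in> N" "y \<in> N" "cls x = cls y" "x \<noteq> y"
    then have "mat4_mult x y \<noteq> mat4_mult y x" using nc by (auto simp: non_commuting_def T1_group_def)
    moreover have "mat4_mult x y = mat4_mult y x" using xy N cls_comm by (auto simp: T1_group_def)
    ultimately show False by simp
  qed
  then have "card N \<le> card (UNIV :: ('a \<times> 'a) option set)"
    by (rule card_inj_on_le) auto
  then show ?thesis using card_opt by metis
qed simp

definition gg :: "('a \<times> 'a) option \<Rightarrow> nat \<Rightarrow> nat \<Rightarrow> 'a::field" where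
  "gg u = (case u of None \<Rightarrow> mk 0 0 0 1 0 | Some (d, e) \<Rightarrow> mk 1 0 0 d e)"

lemma comm_mk: "mat4_mult (mk a b c d e) (mk a' b' c' d' e') = mat4_mult (mk a' b' c' d' e') (mk a b c d e)
   \<longleftrightarrow> a*d' = a'*d \<and> a*e' = a'*e"
  using comm_T1[OF mk_T1 mk_T1] by simp

lemma gg_inj: "inj gg"
proof (rule injI)
  fix u v :: "('a \<times> 'a) option" assume h: "gg u = gg v"
  show "u = v"
  proof (cases u)
    case None
    then show ?thesis using h by (cases v) (auto simp: gg_def mk_eq)
  next
    case (Some p)
    then show ?thesis using h by (cases v; cases p) (auto simp: gg_def mk_eq)
  qed
qed

lemma gg_nc: assumes "u \<noteq> v" shows "mat4_mult (gg u) (gg v) \<noteq> mat4_mult (gg v) (gg u)"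
proof (cases u)
  case None
  then obtain d e where "v = Some (d, e)" using assms by (cases v) auto
  then show ?thesis using None by (simp add: gg_def comm_mk)
next
  case (Some p)
  obtain d e where p: "p = (d, e)" by (cases p)
  show ?thesis
  proof (cases v)
    case None
    then show ?thesis using Some p by (simp add: gg_def comm_mk)
  next
    case (Some q)
    obtain d' e' where q: "q = (d', e')" by (cases q)
    then show ?thesis using Some `u = Some p` p assms by (auto simp: gg_def comm_mk)
  qed
qed
lemma lower:
  fixes F :: "'a::{field,finite} itself"
  shows "card (UNIV::'a::{field,finite} set)^2 + 1 \<in> {card N |N. N \<subseteq> carrier (T1_group F) \<and> non_commuting (T1_group F) N}"
proof -
  have "card (range (gg :: _ \<Rightarrow> _ \<Rightarrow> _ \<Rightarrow> 'a)) = card (UNIV::'a set)^2 + 1"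
    using card_image[OF gg_inj] card_opt by metis
  moreover have "range (gg :: _ \<Rightarrow> _ \<Rightarrow> _ \<Rightarrow> 'a) \<subseteq> carrier (T1_group F)"
    unfolding gg_def by (auto simp: T1_group_def mk_T1 split: option.splits)
  moreover have "non_commuting (T1_group F) (range (gg :: _ \<Rightarrow> _ \<Rightarrow> _ \<Rightarrow> 'a))"
    unfolding non_commuting_def
  proof (intro ballI impI)
    fix x y assume "x \<in> range (gg :: _ \<Rightarrow> _ \<Rightarrow> _ \<Rightarrow> 'a)" "y \<in> range (gg :: _ \<Rightarrow> _ \<Rightarrow> _ \<Rightarrow> 'a)" "x \<noteq> y"
    then obtain u v where uv: "x = gg u" "y = gg v" "u \<noteq> v" by blast
    show "x \<otimes>\<^bsub>T1_group F\<^esub> y \<noteq> y \<otimes>\<^bsub>T1_group F\<^esub> x"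
      using gg_nc[OF uv(3)] unfolding uv(1,2) by (simp add: T1_group_def)
  qed
  ultimately have "card (UNIV::'a set)^2 + 1 = card (range (gg :: _ \<Rightarrow> _ \<Rightarrow> _ \<Rightarrow> 'a)) \<and> range (gg :: _ \<Rightarrow> _ \<Rightarrow> _ \<Rightarrow> 'a) \<subseteq> carrier (T1_group F) \<and> non_commuting (T1_group F) (range (gg :: _ \<Rightarrow> _ \<Rightarrow> _ \<Rightarrow> 'a))"
    by simp
  then show ?thesis by (intro CollectI exI)
qed

theorem lemma4p4:
  fixes F :: "'a::{field, finite} itself"
  shows "subgroup T1 (UU4_group F)
       \<and> AC_group (T1_group F)
       \<and> omega (T1_group F) = (card (UNIV :: 'a set)) ^ 2 + 1"
proof (intro conjI subgroup_T1 AC_T1)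
  let ?S = "{card N |N. N \<subseteq> carrier (T1_group F) \<and> non_commuting (T1_group F) N}"
  have b: "\<And>s. s \<in> ?S \<Longrightarrow> s \<le> card (UNIV :: 'a set) ^ 2 + 1" using upper by blast
  have "?S \<subseteq> {..card (UNIV :: 'a set) ^ 2 + 1}" using b by blast
  then have "finite ?S" by (rule finite_subset) simp
  then show "omega (T1_group F) = card (UNIV :: 'a set) ^ 2 + 1"
    unfolding omega_def by (rule Max_eqI[OF _ b lower])
qed

end
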